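(* Fix $s\geqslant2$. For $n\geqslant2$ and $k=1,\dots,n$, put $Y_{n,k}=X_{n,s,k}-p_s$. Define \[\overline Y_{n,s}=\overline X_{n,s}-p_s=\frac1n\sum_{i=1}^nY_{n,i},\qquad \overline Z_{n,s}=\frac1{n-1}\,(Y_{n,1}+\dots+Y_{n,n-1}).\] Then $F_{\overline Z_{n,s}}-F_{\overline Y_{n,s}}\to0$ uniformly on $\mathbb R$ as $n\to\infty$, where $F_X$ denotes the distribution function of a random variable $X$. The objects $X_{n,s,i}$, $\overline X_{n,s}$ and $p_s$ are defined in the context.
   Context: Consider the tiling of the plane by regular hexagons of side $1$, called cells. For an integer $s\geqslant2$, fix a cell $O$. Let $M_s$ be the set of all cells lying inside the regular hexagon that is centred at the centre of $O$, has sides of length $s\sqrt3$, and has its sides perpendicular to sides of the cells. The set $M_s$ has $m+1=1+3s(s-1)$ cells. Number the cells other than $O$ as $v_1,\dots,v_m$. Two cells are neighbours if they share a side. A cell of $M_s$ is a boundary cell if it has fewer than six neighbours in $M_s$. For an integer $n\geqslant2$, let $\Omega_{n,s}$ be the set of $n$-tuples $f=(f_1,\dots,f_n)$ of functions $f_i:\{v_1,\dots,v_m\}\to\{0,1\}$ such that $f_1+\dots+f_n\equiv1\pmod 2$ at every cell. Equip $\Omega_{n,s}$ with the uniform probability measure $P(A)=|A|\,2^{-(n-1)m}$. A path from the centre to the boundary is a sequence of pairwise distinct cells $v_{j_1},\dots,v_{j_t}$ with the following properties: - $v_{j_1}$ is a neighbour of $O$; - $v_{j_l}$ and $v_{j_{l+1}}$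 are neighbours for each $l$; - $v_{j_t}$ is a boundary cell. The $i$-th fluid flows from the centre to the boundary for $f$ if there is such a path with $f_i(v_{j_l})=1$ for all $l$. Let $A_{n,s,i}$ be this event and $X_{n,s,i}$ its indicator. Set $\overline X_{n,s}=\frac1n\sum_{i=1}^nX_{n,s,i}$. The probability $P(A_{n,s,i})$ does not depend on $n$ or $i$; denote it by $p_s$. *)

theory Defs
  imports "HOL-Probability.Probability"
begin

text \<open>Hexagonal cells in axial coordinates; the centre cell O is (0,0).
  The six neighbours of a cell differ from it by (1,0),(0,1),(1,-1) and their negatives.\<close>

type_synonym cell = "int \<times> int"

definition hexnorm :: "cell \<Rightarrow> int" where
  "hexnorm c = max \<bar>fst c\<bar> (max \<bar>snd c\<bar> \<bar>fst c + snd c\<bar>)"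

definition nbr :: "cell \<Rightarrow> cell \<Rightarrow> bool" where
  "nbr a b \<longleftrightarrow> hexnorm (fst a - fst b, snd a - snd b) = 1"

text \<open>M_s: cells inside the hexagon of side s*sqrt 3 (1 + 3s(s-1) cells).\<close>
definition Mset :: "nat \<Rightarrow> cell set" where
  "Mset s = {c. hexnorm c \<le> int s - 1}"

definition Vset :: "nat \<Rightarrow> cell set" where
  "Vset s = Mset s - {(0, 0)}"

definition boundary :: "nat \<Rightarrow> cell \<Rightarrow> bool" where
  "boundary s c \<longleftrightarrow> c \<in> Mset s \<and> card {d \<in> Mset s. nbr c d} < 6"

text \<open>Omega_{n,s}: tuples (f_1..f_n) of 0/1-valued functions on the cells v_j with odd sum
  everywhere; encoded as f :: nat => cell => bool, extensional (False outside 1..n and V).\<close>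
definition Omega :: "nat \<Rightarrow> nat \<Rightarrow> (nat \<Rightarrow> cell \<Rightarrow> bool) set" where
  "Omega n s = {f. (\<forall>i c. f i c \<longrightarrow> i \<in> {1..n} \<and> c \<in> Vset s) \<and>
                   (\<forall>c\<in>Vset s. odd (card {i \<in> {1..n}. f i c}))}"

definition Pr :: "nat \<Rightarrow> nat \<Rightarrow> (nat \<Rightarrow> cell \<Rightarrow> bool) pmf" where
  "Pr n s = pmf_of_set (Omega n s)"

definition flows :: "nat \<Rightarrow> nat \<Rightarrow> (nat \<Rightarrow> cell \<Rightarrow> bool) \<Rightarrow> bool" where
  "flows s i f \<longleftrightarrow> (\<exists>p. p \<noteq> [] \<and> distinct p \<and> set p \<subseteq> Vset s \<and>
      nbr (0, 0) (hd p) \<and> (\<forall>l. Suc l < length p \<longrightarrow> nbr (p ! l) (p ! Suc l)) \<and>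
      boundary s (last p) \<and> (\<forall>c\<in>set p. f i c))"

definition Xind :: "nat \<Rightarrow> nat \<Rightarrow> (nat \<Rightarrow> cell \<Rightarrow> bool) \<Rightarrow> real" where
  "Xind s i f = (if flows s i f then 1 else 0)"

text \<open>p_s = P(A_{n,s,i}), which is independent of n and i; we take n = 2, i = 1.\<close>
definition ps :: "nat \<Rightarrow> real" where
  "ps s = measure_pmf.prob (Pr 2 s) {f. flows s 1 f}"

definition Xbar :: "nat \<Rightarrow> nat \<Rightarrow> (nat \<Rightarrow> cell \<Rightarrow> bool) \<Rightarrow> real" where
  "Xbar n s f = (\<Sum>i = 1..n. Xind s i f) / real n"

definition Yv :: "nat \<Rightarrow> nat \<Rightarrow> (nat \<Rightarrow> cell \<Rightarrow> bool) \<Rightarrow> real" where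
  "Yv s k f = Xind s k f - ps s"

definition Ybar :: "nat \<Rightarrow> nat \<Rightarrow> (nat \<Rightarrow> cell \<Rightarrow> bool) \<Rightarrow> real" where
  "Ybar n s f = Xbar n s f - ps s"

definition Zbar :: "nat \<Rightarrow> nat \<Rightarrow> (nat \<Rightarrow> cell \<Rightarrow> bool) \<Rightarrow> real" where
  "Zbar n s f = (\<Sum>i = 1..n - 1. Yv s i f) / (real n - 1)"

definition distfun :: "'a pmf \<Rightarrow> ('a \<Rightarrow> real) \<Rightarrow> real \<Rightarrow> real" where
  "distfun M X x = measure_pmf.prob M {w. X w \<le> x}"

end

theory Submission
  imports Defs
begin

definition bb :: "nat \<Rightarrow> real \<Rightarrow> nat \<Rightarrow> real" where
  "bb N q j = real (N choose j) * q ^ j * (1 - q) ^ (N - j)"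

lemma choose_ratio: "(N - j) * (N choose j) = Suc j * (N choose Suc j)"
proof (cases N)
  case 0 then show ?thesis by simp
next
  case (Suc M)
  show ?thesis using binomial_absorb_comp[of N j] Suc_times_binomial[of j M] Suc by simp
qed

lemma bb_ratio:
  assumes "j < N"
  shows "bb N q (Suc j) * real (Suc j) * (1 - q) = bb N q j * real (N - j) * q"
proof -
  have e: "N - j = Suc (N - Suc j)" using assms by simp
  have c: "real (N choose Suc j) * real (Suc j) = real (N choose j) * real (N - j)"
    using choose_ratio[of N j] by (metis mult.commute of_nat_mult)
  have "bb N q (Suc j) * real (Suc j) * (1 - q)
      = (real (N choose Suc j) * real (Suc j)) * q ^ Suc j * (1 - q) ^ Suc (N - Suc j)"
    unfolding bb_def by (simp add: algebra_simps)
  also have "\<dots> = (real (N choose j) * real (N - j)) * q ^ Suc j * (1 - q) ^ (N - j)"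
    using c e by simp
  also have "\<dots> = bb N q j * real (N - j) * q"
    unfolding bb_def by (simp add: algebra_simps)
  finally show ?thesis .
qed

lemma bb_nonneg: "0 \<le> q \<Longrightarrow> q \<le> 1 \<Longrightarrow> 0 \<le> bb N q j"
  unfolding bb_def by simp

lemma bb_step:
  fixes q :: real and N L k j :: nat
  assumes q: "0 < q" "q < 1" and L: "1 \<le> L" and NL: "2 * real L ^ 2 \<le> real N * (q * (1 - q))"
    and k: "real k \<le> real N * q" and j: "k \<le> j" "j < k + L"
  shows "bb N q (Suc j) \<ge> (1 - real L / (real N * (q * (1 - q)))) * bb N q j"
proof -
  define c where "c = q * (1 - q)"
  have c0: "c > 0" using q by (simp add: c_def)
  have N0: "real N * c > 0"
  proof -
    have "real L ^ 2 \<ge> 1" using L by simp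
    then show ?thesis using NL unfolding c_def by linarith
  qed
  have Lle: "real L \<le> real N * c"
  proof -
    have "real L \<le> real L ^ 2" using L by (simp add: power2_eq_square)
    then show ?thesis using NL unfolding c_def by linarith
  qed
  have Nq: "real N * q + real L < real N"
  proof -
    have Npos: "real N > 0" using N0 by (cases N) auto
    have c1: "c < 1 - q" unfolding c_def using q by simp
    have "real N * c < real N * (1 - q)"
      using c1 Npos by (rule mult_strict_left_mono)
    then show ?thesis using Lle by (simp add: algebra_simps)
  qed
  have jN: "j < N" using j k Nq by linarith
  define r where "r = 1 - real L / (real N * c)"
  have r0: "0 \<le> r" using Lle N0 by (simp add: r_def field_simps)
  have Nj: "real (N - j) = real N - real j" using jN by simp
  have key: "real (N - j) * q \<ge> r * real (Suc j) * (1 - q)"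
  proof -
    have j1: "real (Suc j) \<le> real N * q + real L" using j k by simp
    have A: "real (N - j) * q \<ge> (real N * (1 - q) - real L) * q"
      using Nj j1 q by (intro mult_right_mono) (auto simp: algebra_simps)
    have B: "r * real (Suc j) * (1 - q) \<le> r * (real N * q + real L) * (1 - q)"
      using j1 r0 q by (intro mult_right_mono mult_left_mono) auto
    have C: "r * (real N * q + real L) * (1 - q) \<le> (real N * (1 - q) - real L) * q"
    proof -
      have "real N > 0" using N0 by (cases N) auto
      then have Nqp: "real N * q > 0" using q by simp
      have "r * (real N * q + real L) * (1 - q) * (real N * q)
            = (real N * q + real L) * (1 - q) * (real N * q) - real L * (real N * q + real L)"
      proof -
        have rr: "r * (real N * c) = real N * c - real L"
        proof -
          have "real N \<noteq> 0" using N0 by (cases N) auto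
          moreover have "c \<noteq> 0" using c0 by simp
          ultimately
          show ?thesis unfolding r_def by (simp add: field_simps)
        qed
        have "r * (real N * q + real L) * (1 - q) * (real N * q) = (real N * q + real L) * (r * (real N * c))"
          unfolding c_def by (simp add: algebra_simps)
        also have "\<dots> = (real N * q + real L) * (real N * c - real L)" using rr by simp
        finally show ?thesis unfolding c_def by (simp add: algebra_simps)
      qed
      also have "\<dots> \<le> (real N * (1 - q) - real L) * q * (real N * q)"
        by (simp add: algebra_simps power2_eq_square)
      finally show ?thesis using Nqp by (simp only: mult_le_cancel_right_pos)
    qed
    show ?thesis using A B C by linarith
  qed
  have "bb N q (Suc j) * (real (Suc j) * (1 - q)) \<ge> (r * bb N q j) * (real (Suc j) * (1 - q))"
  proof -
    have "bb N q (Suc j) * (real (Suc j) * (1 - q)) = bb N q j * (real (N - j) * q)"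
      using bb_ratio[OF jN, of q] by (simp add: algebra_simps)
    also have "\<dots> \<ge> bb N q j * (r * real (Suc j) * (1 - q))"
      using key bb_nonneg[of q N j] q by (intro mult_left_mono) auto
    finally show ?thesis by (simp add: algebra_simps)
  qed
  then have "bb N q (Suc j) \<ge> r * bb N q j"
    using q by (subst (asm) mult_le_cancel_right_pos) auto
  then show ?thesis unfolding r_def c_def .
qed

lemma bb_pmf: "0 \<le> q \<Longrightarrow> q \<le> 1 \<Longrightarrow> bb N q j = pmf (binomial_pmf N q) j"
  unfolding bb_def by simp

lemma bb_lower:
  fixes q :: real and N L k :: nat
  assumes q: "0 < q" "q < 1" and L: "1 \<le> L" and NL: "2 * real L ^ 2 \<le> real N * (q * (1 - q))"
    and k: "real k \<le> real N * q"
  shows "i \<le> L \<Longrightarrow> bb N q (k + i) \<ge> (1 - real i * real L / (real N * (q * (1 - q)))) * bb N q k"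
proof (induction i)
  case 0 then show ?case by simp
next
  case (Suc i)
  define a where "a = real L / (real N * (q * (1 - q)))"
  have N0: "real N * (q * (1 - q)) > 0"
  proof -
    have "real L ^ 2 \<ge> 1" using L by simp
    then show ?thesis using NL by linarith
  qed
  have a0: "a \<ge> 0" unfolding a_def using N0 by simp
  have aL: "a * real L \<le> 1 / 2"
  proof -
    have "a * real L = real L ^ 2 / (real N * (q * (1 - q)))"
      unfolding a_def by (simp add: power2_eq_square)
    also have "\<dots> \<le> 1 / 2" using NL N0 by (simp add: field_simps)
    finally show ?thesis .
  qed
  have aLL: "a * real i \<le> a * real L"
    using Suc.prems a0 by (intro mult_left_mono) auto
  have a1: "a * 1 \<le> a * real L"
    using L a0 by (intro mult_left_mono) auto
  have ai: "a * real i \<le> 1" using aLL aL by linarith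
  have IH: "bb N q (k + i) \<ge> (1 - real i * a) * bb N q k"
    using Suc.IH Suc.prems unfolding a_def by simp
  have st: "bb N q (Suc (k + i)) \<ge> (1 - a) * bb N q (k + i)"
    using bb_step[OF q L NL k, of "k + i"] Suc.prems unfolding a_def by simp
  have b0: "bb N q k \<ge> 0" using bb_nonneg q by simp
  have "(1 - real (Suc i) * a) * bb N q k \<le> (1 - a) * ((1 - real i * a) * bb N q k)"
  proof -
    have "(1 - real (Suc i) * a) \<le> (1 - a) * (1 - real i * a)"
      using a0 by (simp add: algebra_simps)
    then show ?thesis using b0 by (metis mult.assoc mult_right_mono)
  qed
  also have "\<dots> \<le> (1 - a) * bb N q (k + i)"
  proof -
    have h: "1 - a \<ge> 0" using a1 aL by linarith
    show ?thesis using IH h by (rule mult_left_mono)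
  qed
  also have "\<dots> \<le> bb N q (k + Suc i)" using st by simp
  finally show ?case unfolding a_def by simp
qed

lemma bb_anti_low:
  fixes q :: real and N L k :: nat
  assumes q: "0 < q" "q < 1" and L: "1 \<le> L" and NL: "2 * real L ^ 2 \<le> real N * (q * (1 - q))"
    and k: "real k \<le> real N * q"
  shows "bb N q k \<le> 2 / real L"
proof -
  have N0: "real N * (q * (1 - q)) > 0"
  proof -
    have "real L ^ 2 \<ge> 1" using L by simp
    then show ?thesis using NL by linarith
  qed
  have each: "bb N q (k + i) \<ge> bb N q k / 2" if "i < L" for i
  proof -
    have "real i * real L \<le> real L * real L" using that by simp
    also have "\<dots> \<le> real N * (q * (1 - q)) / 2" using NL by (simp add: power2_eq_square)
    finally have t: "real i * real L / (real N * (q * (1 - q))) \<le> 1 / 2"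
      using N0 by (simp add: field_simps)
    have "(1 - real i * real L / (real N * (q * (1 - q)))) * bb N q k \<ge> bb N q k / 2"
    proof -
      have b0: "0 \<le> bb N q k" using bb_nonneg q by simp
      have "(1 / 2) * bb N q k \<le> (1 - real i * real L / (real N * (q * (1 - q)))) * bb N q k"
        using t by (intro mult_right_mono[OF _ b0]) simp
      then show ?thesis by simp
    qed
    moreover have "bb N q (k + i) \<ge> (1 - real i * real L / (real N * (q * (1 - q)))) * bb N q k"
      using bb_lower[OF q L NL k, of i] that by simp
    ultimately show ?thesis by linarith
  qed
  have "real L * (bb N q k / 2) = (\<Sum>i<L. bb N q k / 2)" by simp
  also have "\<dots> \<le> (\<Sum>i<L. bb N q (k + i))" using each by (intro sum_mono) auto
  also have "\<dots> = (\<Sum>j\<in>(\<lambda>i. k + i) ` {..<L}. pmf (binomial_pmf N q) j)"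
  proof -
    have "(\<Sum>j\<in>(\<lambda>i. k + i) ` {..<L}. pmf (binomial_pmf N q) j) = (\<Sum>i<L. pmf (binomial_pmf N q) (k + i))"
      by (subst sum.reindex) (auto simp: inj_on_def)
    moreover have "(\<Sum>i<L. bb N q (k + i)) = (\<Sum>i<L. pmf (binomial_pmf N q) (k + i))"
      using q by (intro sum.cong refl bb_pmf) auto
    ultimately show ?thesis by simp
  qed
  also have "\<dots> = measure_pmf.prob (binomial_pmf N q) ((\<lambda>i. k + i) ` {..<L})"
    by (simp add: measure_measure_pmf_finite)
  also have "\<dots> \<le> 1" by simp
  finally have "real L * bb N q k \<le> 2" by simp
  then show ?thesis using L by (simp add: field_simps)
qed

lemma bb_anti:
  fixes q :: real and N L k :: nat
  assumes q: "0 < q" "q < 1" and L: "1 \<le> L" and NL: "2 * real L ^ 2 \<le> real N * (q * (1 - q))"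
  shows "pmf (binomial_pmf N q) k \<le> 2 / real L"
proof -
  have "bb N q k \<le> 2 / real L"
  proof (cases "real k \<le> real N * q")
    case True then show ?thesis using bb_anti_low[OF q L NL] by simp
  next
    case False
    show ?thesis
    proof (cases "k \<le> N")
      case True
      have e: "bb N q k = bb N (1 - q) (N - k)"
        unfolding bb_def using True binomial_symmetric[OF True, symmetric] by (simp add: mult.commute mult.left_commute)
      have q': "0 < 1 - q" "1 - q < 1" using q by auto
      have NL': "2 * real L ^ 2 \<le> real N * ((1 - q) * (1 - (1 - q)))" using NL by (simp add: mult.commute)
      have k': "real (N - k) \<le> real N * (1 - q)" using False True by (simp add: algebra_simps)
      show ?thesis using e bb_anti_low[OF q' L NL' k'] by simp
    next
      case False
      then have "bb N q k = 0" unfolding bb_def by simp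
      then show ?thesis by simp
    qed
  qed
  then show ?thesis using q by (simp add: bb_pmf)
qed

definition Gset :: "nat \<Rightarrow> (cell \<Rightarrow> bool) set" where
  "Gset s = {g. \<forall>c. g c \<longrightarrow> c \<in> Vset s}"

definition fl :: "nat \<Rightarrow> (cell \<Rightarrow> bool) \<Rightarrow> bool" where
  "fl s g \<longleftrightarrow> (\<exists>p. p \<noteq> [] \<and> distinct p \<and> set p \<subseteq> Vset s \<and>
      nbr (0, 0) (hd p) \<and> (\<forall>l. Suc l < length p \<longrightarrow> nbr (p ! l) (p ! Suc l)) \<and>
      boundary s (last p) \<and> (\<forall>c\<in>set p. g c))"

lemma flows_fl: "flows s i f = fl s (f i)"
  unfolding flows_def fl_def by simp

lemma fl_False: "\<not> fl s (\<lambda>_. False)"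
proof
  assume "fl s (\<lambda>_. False)"
  then obtain p :: "cell list" where p: "p \<noteq> []" "\<forall>c\<in>set p. False" unfolding fl_def by blast
  then show False using hd_in_set[OF p(1)] by blast
qed

lemma finite_Vset: "finite (Vset s)"
proof -
  have "Mset s \<subseteq> {-int s..int s} \<times> {-int s..int s}"
  proof
    fix c assume c: "c \<in> Mset s"
    obtain a b where ab: "c = (a, b)" by (cases c)
    have h: "hexnorm (a, b) \<le> int s - 1" using c ab by (simp add: Mset_def)
    have "\<bar>a\<bar> \<le> hexnorm (a, b)" "\<bar>b\<bar> \<le> hexnorm (a, b)" by (simp_all add: hexnorm_def)
    then have "a \<in> {-int s..int s}" "b \<in> {-int s..int s}" using h by (simp_all, arith+)
    then show "c \<in> {-int s..int s} \<times> {-int s..int s}" using ab by simp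
  qed
  moreover have "finite ({-int s..int s} \<times> {-int s..int s})" by simp
  ultimately have "finite (Mset s)" by (rule finite_subset)
  then show ?thesis unfolding Vset_def by simp
qed

lemma Gset_eq: "Gset s = (\<lambda>A c. c \<in> A) ` Pow (Vset s)"
proof
  show "Gset s \<subseteq> (\<lambda>A c. c \<in> A) ` Pow (Vset s)"
  proof
    fix g assume g: "g \<in> Gset s"
    have "g = (\<lambda>c. c \<in> {c. g c})" by simp
    moreover have "{c. g c} \<in> Pow (Vset s)" using g unfolding Gset_def by auto
    ultimately show "g \<in> (\<lambda>A c. c \<in> A) ` Pow (Vset s)" by blast
  qed
  show "(\<lambda>A c. c \<in> A) ` Pow (Vset s) \<subseteq> Gset s" unfolding Gset_def by auto
qed

lemma finite_Gset: "finite (Gset s)"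
  unfolding Gset_eq using finite_Vset by simp

lemma card_Suc_filter:
  "card {i \<in> {1..Suc N}. P i} = card {i \<in> {1..N}. P i} + (if P (Suc N) then 1 else 0)"
proof -
  have "{i \<in> {1..Suc N}. P i} = (if P (Suc N) then insert (Suc N) {i \<in> {1..N}. P i} else {i \<in> {1..N}. P i})"
    by (auto simp: le_Suc_eq)
  then show ?thesis by simp
qed

definition extf :: "nat \<Rightarrow> nat \<Rightarrow> (nat \<Rightarrow> cell \<Rightarrow> bool) \<Rightarrow> (nat \<Rightarrow> cell \<Rightarrow> bool)" where
  "extf N s h = (\<lambda>i. if i \<in> {1..N} then h i else if i = Suc N then
      (\<lambda>c. c \<in> Vset s \<and> even (card {j \<in> {1..N}. h j c})) else (\<lambda>_. False))"

definition PP :: "nat \<Rightarrow> nat \<Rightarrow> (nat \<Rightarrow> cell \<Rightarrow> bool) set" where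
  "PP N s = PiE_dflt {1..N} (\<lambda>_. False) (\<lambda>_. Gset s)"

lemma Omega_eq: "Omega (Suc N) s = extf N s ` PP N s"
proof
  show "extf N s ` PP N s \<subseteq> Omega (Suc N) s"
  proof
    fix f assume "f \<in> extf N s ` PP N s"
    then obtain h where h: "h \<in> PP N s" and f: "f = extf N s h" by blast
    have hG: "\<And>i c. i \<in> {1..N} \<Longrightarrow> h i c \<Longrightarrow> c \<in> Vset s"
      using h unfolding PP_def PiE_dflt_def Gset_def by blast
    have A: "\<forall>i c. f i c \<longrightarrow> i \<in> {1..Suc N} \<and> c \<in> Vset s"
      using hG unfolding f extf_def by (auto split: if_splits)
    have B: "odd (card {i \<in> {1..Suc N}. f i c})" if c: "c \<in> Vset s" for c
    proof -
      have e: "{j \<in> {1..N}. f j c} = {j \<in> {1..N}. h j c}" unfolding f extf_def by auto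
      have "f (Suc N) c = even (card {j \<in> {1..N}. h j c})" using c unfolding f extf_def by simp
      then show ?thesis using card_Suc_filter[of N "\<lambda>i. f i c"] e by simp
    qed
    show "f \<in> Omega (Suc N) s" unfolding Omega_def using A B by blast
  qed
  show "Omega (Suc N) s \<subseteq> extf N s ` PP N s"
  proof
    fix f assume f: "f \<in> Omega (Suc N) s"
    define h where "h = (\<lambda>i. if i \<in> {1..N} then f i else (\<lambda>_. False))"
    have A: "\<And>i c. f i c \<Longrightarrow> i \<in> {1..Suc N} \<and> c \<in> Vset s" using f unfolding Omega_def by blast
    have B: "\<And>c. c \<in> Vset s \<Longrightarrow> odd (card {i \<in> {1..Suc N}. f i c})" using f unfolding Omega_def by blast
    have hP: "h \<in> PP N s" unfolding PP_def PiE_dflt_def Gset_def h_def using A by auto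
    have "f = extf N s h"
    proof (rule ext, rule ext)
      fix i c
      show "f i c = extf N s h i c"
      proof (cases "i \<in> {1..N}")
        case True then show ?thesis unfolding extf_def h_def by simp
      next
        case False
        show ?thesis
        proof (cases "i = Suc N")
          case True
          have e: "{j \<in> {1..N}. h j c} = {j \<in> {1..N}. f j c}" unfolding h_def by auto
          show ?thesis
          proof (cases "c \<in> Vset s")
            case cV: True
            have o: "odd (card {j \<in> {1..N}. f j c} + (if f (Suc N) c then 1 else 0))"
              using B[OF cV] card_Suc_filter[of N "\<lambda>i. f i c"] by simp
            have x: "extf N s h i c = even (card {j \<in> {1..N}. f j c})"
              using True cV e unfolding extf_def by simp
            show ?thesis using o x True by (cases "f (Suc N) c") auto
          next
            case cV: False
            then show ?thesis using True False A[of i c] unfolding extf_def by auto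
          qed
        next
          case F2: False
          then show ?thesis using False A[of i c] unfolding extf_def by auto
        qed
      qed
    qed
    then show "f \<in> extf N s ` PP N s" using hP by blast
  qed
qed

lemma inj_extf: "inj_on (extf N s) (PP N s)"
proof (rule inj_onI)
  fix h h' assume h: "h \<in> PP N s" and h': "h' \<in> PP N s" and e: "extf N s h = extf N s h'"
  show "h = h'"
  proof
    fix i show "h i = h' i"
    proof (cases "i \<in> {1..N}")
      case True
      then show ?thesis using fun_cong[OF e, of i] unfolding extf_def by simp
    next
      case False
      then show ?thesis using h h' unfolding PP_def PiE_dflt_def by auto
    qed
  qed
qed

lemma PP_finite: "finite (PP N s)"
  unfolding PP_def using finite_Gset by (intro finite_PiE_dflt) auto

lemma PP_ne: "PP N s \<noteq> {}"
proof -
  have "(\<lambda>_ _. False) \<in> PP N s" unfolding PP_def PiE_dflt_def Gset_def by auto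
  then show ?thesis by blast
qed

lemma Pr_eq: "Pr (Suc N) s = map_pmf (extf N s) (pmf_of_set (PP N s))"
  unfolding Pr_def Omega_eq using map_pmf_of_set_inj[OF inj_extf PP_ne PP_finite] by simp

definition qq :: "nat \<Rightarrow> real" where
  "qq s = pmf (map_pmf (fl s) (pmf_of_set (Gset s))) True"

lemma Gset_ne: "Gset s \<noteq> {}"
proof -
  have "(\<lambda>_. False) \<in> Gset s" unfolding Gset_def by auto
  then show ?thesis by blast
qed

lemma bool_pmf_bernoulli: "(M :: bool pmf) = bernoulli_pmf (pmf M True)"
proof (rule pmf_eqI)
  fix b :: bool
  have "(\<Sum>x\<in>(UNIV :: bool set). pmf M x) = 1" by (rule sum_pmf_eq_1) auto
  then have s: "pmf M True + pmf M False = 1" by (simp add: UNIV_bool)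
  have "0 \<le> pmf M True" "pmf M True \<le> 1" by (auto simp: pmf_le_1)
  then show "pmf M b = pmf (bernoulli_pmf (pmf M True)) b"
    using s by (cases b) auto
qed

lemma map_fl: "map_pmf (fl s) (pmf_of_set (Gset s)) = bernoulli_pmf (qq s)"
  unfolding qq_def by (rule bool_pmf_bernoulli)

lemma qq_01: "0 \<le> qq s" "qq s \<le> 1"
  unfolding qq_def by (auto simp: pmf_le_1)

definition Scount :: "nat \<Rightarrow> nat \<Rightarrow> (nat \<Rightarrow> cell \<Rightarrow> bool) \<Rightarrow> nat" where
  "Scount N s f = card {i \<in> {1..N}. flows s i f}"

lemma Scount_law: "map_pmf (Scount N s) (Pr (Suc N) s) = binomial_pmf N (qq s)"
proof -
  have e1: "Scount N s \<circ> extf N s = (\<lambda>h. card {i \<in> {1..N}. (fl s \<circ> h) i})"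
  proof
    fix h
    have "{i \<in> {1..N}. flows s i (extf N s h)} = {i \<in> {1..N}. (fl s \<circ> h) i}"
      unfolding flows_fl extf_def by auto
    then show "(Scount N s \<circ> extf N s) h = card {i \<in> {1..N}. (fl s \<circ> h) i}"
      unfolding Scount_def by simp
  qed
  have "map_pmf (Scount N s) (Pr (Suc N) s)
      = map_pmf (\<lambda>h. card {i \<in> {1..N}. (fl s \<circ> h) i}) (pmf_of_set (PP N s))"
    unfolding Pr_eq map_pmf_comp e1[symmetric] by (simp add: comp_def)
  also have "pmf_of_set (PP N s) = Pi_pmf {1..N} (\<lambda>_. False) (\<lambda>_. pmf_of_set (Gset s))"
    unfolding PP_def using finite_Gset Gset_ne by (intro Pi_pmf_of_set[symmetric]) auto
  also have "map_pmf (\<lambda>h. card {i \<in> {1..N}. (fl s \<circ> h) i}) \<dots>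
      = map_pmf (\<lambda>h. card {i \<in> {1..N}. h i}) (map_pmf (\<lambda>h. fl s \<circ> h) (Pi_pmf {1..N} (\<lambda>_. False) (\<lambda>_. pmf_of_set (Gset s))))"
    by (simp add: map_pmf_comp)
  also have "map_pmf (\<lambda>h. fl s \<circ> h) (Pi_pmf {1..N} (\<lambda>_. False) (\<lambda>_. pmf_of_set (Gset s)))
      = Pi_pmf {1..N} False (\<lambda>_. map_pmf (fl s) (pmf_of_set (Gset s)))"
    using fl_False by (intro Pi_pmf_map[symmetric]) auto
  also have "\<dots> = Pi_pmf {1..N} False (\<lambda>_. bernoulli_pmf (qq s))"
    unfolding map_fl ..
  also have "map_pmf (\<lambda>h. card {i \<in> {1..N}. h i}) \<dots> = binomial_pmf N (qq s)"
    using qq_01 by (intro binomial_pmf_altdef'[symmetric]) auto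
  finally show ?thesis .
qed

lemma nbr_path:
  fixes a :: int and x y :: int
  assumes a: "a \<ge> 1" and h: "max \<bar>x\<bar> (max \<bar>y\<bar> \<bar>x + y\<bar>) \<le> a"
    and n: "max \<bar>a - x\<bar> (max \<bar>0 - y\<bar> \<bar>a - x + (0 - y)\<bar>) = 1"
  shows "(x, y) \<in> {(a - 1, 0), (a, -1), (a - 1, 1)}"
proof -
  have h1: "\<bar>x\<bar> \<le> a" "\<bar>x + y\<bar> \<le> a" using h by auto
  have "max \<bar>a - x\<bar> (max \<bar>0 - y\<bar> \<bar>a - x + (0 - y)\<bar>) \<le> 1" using n by simp
  then have n1: "\<bar>a - x\<bar> \<le> 1" "\<bar>0 - y\<bar> \<le> 1" "\<bar>a - x + (0 - y)\<bar> \<le> 1" by auto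
  have ne: "\<not> (x = a \<and> y = 0)" using n by auto
  have l: "x \<le> a" "x + y \<le> a" "a - x \<le> 1" "y \<le> 1" "- 1 \<le> y" "a - x - y \<le> 1"
    using h1 n1 unfolding abs_le_iff by auto
  have "(x = a - 1 \<and> y = 0) \<or> (x = a \<and> y = -1) \<or> (x = a - 1 \<and> y = 1)"
    using l ne by presburger
  then show ?thesis by auto
qed

lemma fl_full:
  assumes s: "s \<ge> 2"
  shows "fl s (\<lambda>c. c \<in> Vset s)"
proof -
  define p where "p = map (\<lambda>j. (int j, 0 :: int)) [1..<s]"
  have len: "length p = s - 1" unfolding p_def by simp
  have nth: "p ! l = (int (Suc l), 0)" if "l < s - 1" for l
    unfolding p_def using that by simp
  have pne: "p \<noteq> []" unfolding p_def using s by simp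
  have dist: "distinct p" unfolding p_def by (simp add: distinct_map inj_on_def)
  have inV: "set p \<subseteq> Vset s"
  proof
    fix c assume "c \<in> set p"
    then obtain j where j: "j \<in> {1..<s}" "c = (int j, 0)" unfolding p_def by auto
    have "hexnorm c = int j" unfolding j(2) hexnorm_def by simp
    then show "c \<in> Vset s" using j unfolding Vset_def Mset_def by auto
  qed
  have hd: "hd p = (1, 0)" unfolding p_def using s by (simp add: hd_map)
  have nb0: "nbr (0, 0) (hd p)" unfolding hd nbr_def hexnorm_def by simp
  have steps: "\<forall>l. Suc l < length p \<longrightarrow> nbr (p ! l) (p ! Suc l)"
  proof (intro allI impI)
    fix l assume "Suc l < length p"
    then have "l < s - 1" "Suc l < s - 1" using len by auto
    then show "nbr (p ! l) (p ! Suc l)" using nth unfolding nbr_def hexnorm_def by simp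
  qed
  define a where "a = int s - 1"
  have a1: "a \<ge> 1" unfolding a_def using s by simp
  have last: "last p = (a, 0)" unfolding p_def a_def using s by (simp add: last_map of_nat_diff)
  have bd: "boundary s (a, 0)"
  proof -
    have inM: "(a, 0) \<in> Mset s" unfolding Mset_def hexnorm_def a_def using s by simp
    have sub: "{d \<in> Mset s. nbr (a, 0) d} \<subseteq> {(a - 1, 0), (a, -1), (a - 1, 1)}"
    proof
      fix d assume d: "d \<in> {d \<in> Mset s. nbr (a, 0) d}"
      obtain x y where xy: "d = (x, y)" by (cases d)
      have h: "max \<bar>x\<bar> (max \<bar>y\<bar> \<bar>x + y\<bar>) \<le> a"
        using d xy unfolding Mset_def hexnorm_def a_def by simp
      have n: "max \<bar>a - x\<bar> (max \<bar>0 - y\<bar> \<bar>a - x + (0 - y)\<bar>) = 1"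
        using d xy unfolding nbr_def hexnorm_def by simp
      show "d \<in> {(a - 1, 0), (a, -1), (a - 1, 1)}" using nbr_path[OF a1 h n] xy by simp
    qed
    have "card {d \<in> Mset s. nbr (a, 0) d} \<le> card {(a - 1, 0), (a, -1), (a - 1, 1 :: int)}"
      by (rule card_mono[OF _ sub]) simp
    also have "\<dots> \<le> 3" by (auto simp: card_insert_if)
    finally show ?thesis unfolding boundary_def using inM by simp
  qed
  show ?thesis unfolding fl_def
    using pne dist inV nb0 steps bd last by (intro exI[of _ p]) auto
qed

lemma qq_pos: assumes "s \<ge> 2" shows "0 < qq s" "qq s < 1"
proof -
  have q: "qq s = real (card (Gset s \<inter> {g. fl s g})) / real (card (Gset s))"
  proof -
    have "fl s -` {True} = {g. fl s g}" by auto
    then show ?thesis unfolding qq_def pmf_map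
      using finite_Gset Gset_ne by (simp add: measure_pmf_of_set)
  qed
  have g0: "(\<lambda>c. c \<in> Vset s) \<in> Gset s \<inter> {g. fl s g}"
    using fl_full[OF assms] unfolding Gset_def by simp
  have g1: "(\<lambda>_. False) \<in> Gset s - {g. fl s g}"
    using fl_False unfolding Gset_def by simp
  have c1: "card (Gset s \<inter> {g. fl s g}) > 0"
    using g0 finite_Gset by (metis card_gt_0_iff empty_iff finite_Int)
  have c2: "card (Gset s \<inter> {g. fl s g}) < card (Gset s)"
    using g1 finite_Gset by (intro psubset_card_mono) auto
  show "0 < qq s" unfolding q using c1 c2 by simp
  show "qq s < 1" unfolding q using c1 c2 by simp
qed

lemma ps_qq: "ps s = qq s"
proof -
  have law: "map_pmf (Scount 1 s) (Pr 2 s) = binomial_pmf 1 (qq s)"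
    using Scount_law[of 1 s] by (simp add: numeral_2_eq_2)
  have e: "{i \<in> {1..1}. flows s i f} = (if flows s 1 f then {1} else {})" for f by auto
  have pre: "Scount 1 s -` {1} = {f. flows s 1 f}"
    unfolding Scount_def using e by (auto split: if_splits)
  have "ps s = measure (map_pmf (Scount 1 s) (Pr 2 s)) {1}"
    unfolding ps_def measure_map_pmf pre ..
  also have "\<dots> = pmf (binomial_pmf 1 (qq s)) 1" unfolding law measure_pmf_single ..
  also have "\<dots> = qq s" using qq_01[of s] by simp
  finally show ?thesis .
qed

lemma sumX: "(\<Sum>i = 1..N. Xind s i f) = real (Scount N s f)"
proof -
  have "(\<Sum>i = 1..N. Xind s i f) = (\<Sum>i \<in> {1..N}. if flows s i f then 1 else 0)"
    unfolding Xind_def ..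
  also have "\<dots> = (\<Sum>i \<in> {i \<in> {1..N}. flows s i f}. 1)"
    by (subst sum.inter_filter) auto
  also have "\<dots> = real (Scount N s f)" unfolding Scount_def by simp
  finally show ?thesis .
qed

lemma Zbar_eq: "N \<ge> 1 \<Longrightarrow> Zbar (Suc N) s f = real (Scount N s f) / real N - ps s"
  unfolding Zbar_def Yv_def sum_subtractf sumX by (simp add: field_simps)

lemma Ybar_eq: "Ybar (Suc N) s f = (real (Scount N s f) + Xind s (Suc N) f) / real (Suc N) - ps s"
proof -
  have "(\<Sum>i = 1..Suc N. Xind s i f) = (\<Sum>i = 1..N. Xind s i f) + Xind s (Suc N) f" by simp
  then show ?thesis unfolding Ybar_def Xbar_def sumX by simp
qed

lemma Scount_le: "Scount N s f \<le> N"
proof -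
  have "Scount N s f \<le> card {1..N}" unfolding Scount_def by (rule card_mono) auto
  then show ?thesis by simp
qed

lemma Xind_01: "0 \<le> Xind s i f" "Xind s i f \<le> 1"
  unfolding Xind_def by auto

lemma R1:
  fixes N sv :: nat and t u :: real
  assumes N: "N \<ge> 1" and t: "0 \<le> t" "t \<le> 1"
    and a: "real sv / real N \<le> u" and b: "\<not> (real sv + t) / real (Suc N) \<le> u"
  shows "sv = nat \<lfloor>real N * u\<rfloor>"
proof -
  have Np: "real N > 0" using N by simp
  have h1: "real sv \<le> real N * u" using a Np by (simp add: divide_le_eq mult.commute)
  have h2: "u * real (Suc N) < real sv + t" using b by (simp add: not_le less_divide_eq)
  have h3: "real N * u < real sv + 1"
  proof (cases "u \<ge> 0")
    case True
    have "real N * u \<le> u * real (Suc N)" using True by (simp add: algebra_simps)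
    then show ?thesis using h2 t by linarith
  next
    case False
    then have "real N * u \<le> 0" using Np by (simp add: mult_nonneg_nonpos)
    then show ?thesis by simp
  qed
  have "\<lfloor>real N * u\<rfloor> = int sv" unfolding floor_eq_iff using h1 h3 by simp
  then show ?thesis by simp
qed

lemma R2:
  fixes N sv :: nat and t u :: real
  assumes N: "N \<ge> 1" and t: "0 \<le> t" "t \<le> 1" and sv: "sv \<le> N"
    and a: "\<not> real sv / real N \<le> u" and b: "(real sv + t) / real (Suc N) \<le> u"
  shows "sv = nat \<lceil>real N * u\<rceil>"
proof -
  have Np: "real N > 0" using N by simp
  have h1: "real N * u < real sv" using a Np by (simp add: not_le less_divide_eq mult.commute)
  have h2: "real sv + t \<le> u * real (Suc N)" using b by (simp add: divide_le_eq)
  have u1: "u < 1"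
  proof -
    have "real sv / real N \<le> 1" using sv Np by simp
    then show ?thesis using a by linarith
  qed
  have h3: "real sv - 1 < real N * u"
  proof -
    have "real sv \<le> real N * u + u" using h2 t by (simp add: algebra_simps)
    then show ?thesis using u1 by linarith
  qed
  have "\<lceil>real N * u\<rceil> = int sv" unfolding ceiling_eq_iff using h1 h3 by simp
  then show ?thesis by simp
qed

lemma prob_diff: "measure_pmf.prob M A - measure_pmf.prob M B \<le> measure_pmf.prob M (A - B)"
proof -
  have "measure_pmf.prob M (A - B) = measure_pmf.prob M A - measure_pmf.prob M (A \<inter> B)"
    by (rule measure_pmf.finite_measure_Diff') auto
  moreover have "measure_pmf.prob M (A \<inter> B) \<le> measure_pmf.prob M B"
    by (rule measure_pmf.finite_measure_mono) auto
  ultimately show ?thesis by simp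
qed

lemma prob_Scount:
  assumes s: "s \<ge> 2" and L: "1 \<le> L" and NL: "2 * real L ^ 2 \<le> real N * (qq s * (1 - qq s))"
  shows "measure_pmf.prob (Pr (Suc N) s) {f. Scount N s f = k} \<le> 2 / real L"
proof -
  have "measure_pmf.prob (Pr (Suc N) s) {f. Scount N s f = k}
      = measure_pmf.prob (map_pmf (Scount N s) (Pr (Suc N) s)) {k}"
    by (simp add: vimage_def)
  also have "\<dots> = pmf (binomial_pmf N (qq s)) k" unfolding Scount_law measure_pmf_single ..
  also have "\<dots> \<le> 2 / real L" using bb_anti[OF qq_pos[OF s] L NL] .
  finally show ?thesis .
qed

lemma main_bound:
  assumes s: "s \<ge> 2" and L: "1 \<le> L" and NL: "2 * real L ^ 2 \<le> real N * (qq s * (1 - qq s))"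
    and N: "N \<ge> 1"
  shows "\<bar>distfun (Pr (Suc N) s) (Zbar (Suc N) s) x - distfun (Pr (Suc N) s) (Ybar (Suc N) s) x\<bar> \<le> 2 / real L"
proof -
  define A where "A = {w. Zbar (Suc N) s w \<le> x}"
  define B where "B = {w. Ybar (Suc N) s w \<le> x}"
  define u where "u = x + ps s"
  have Aeq: "w \<in> A \<longleftrightarrow> real (Scount N s w) / real N \<le> u" for w
    unfolding A_def u_def using Zbar_eq[OF N] by auto
  have Beq: "w \<in> B \<longleftrightarrow> (real (Scount N s w) + Xind s (Suc N) w) / real (Suc N) \<le> u" for w
    unfolding B_def u_def using Ybar_eq by auto
  have AB: "A - B \<subseteq> {f. Scount N s f = nat \<lfloor>real N * u\<rfloor>}"
  proof
    fix w assume "w \<in> A - B"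
    then show "w \<in> {f. Scount N s f = nat \<lfloor>real N * u\<rfloor>}"
      using R1[OF N Xind_01] Aeq Beq by auto
  qed
  have BA: "B - A \<subseteq> {f. Scount N s f = nat \<lceil>real N * u\<rceil>}"
  proof
    fix w assume "w \<in> B - A"
    then show "w \<in> {f. Scount N s f = nat \<lceil>real N * u\<rceil>}"
      using R2[OF N Xind_01 Scount_le] Aeq Beq by auto
  qed
  have 1: "measure_pmf.prob (Pr (Suc N) s) A - measure_pmf.prob (Pr (Suc N) s) B \<le> 2 / real L"
    using prob_diff[of "Pr (Suc N) s" A B]
      measure_pmf.finite_measure_mono[OF AB, of "Pr (Suc N) s"]
      prob_Scount[OF s L NL, of "nat \<lfloor>real N * u\<rfloor>"] by simp
  have 2: "measure_pmf.prob (Pr (Suc N) s) B - measure_pmf.prob (Pr (Suc N) s) A \<le> 2 / real L"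
    using prob_diff[of "Pr (Suc N) s" B A]
      measure_pmf.finite_measure_mono[OF BA, of "Pr (Suc N) s"]
      prob_Scount[OF s L NL, of "nat \<lceil>real N * u\<rceil>"] by simp
  show ?thesis unfolding distfun_def A_def[symmetric] B_def[symmetric] using 1 2 by linarith
qed

theorem lemma3:
  fixes s :: nat
  assumes "s \<ge> 2"
  shows "uniform_limit UNIV
           (\<lambda>n x. distfun (Pr n s) (Zbar n s) x - distfun (Pr n s) (Ybar n s) x)
           (\<lambda>x. 0) sequentially"
proof (rule uniform_limitI)
  fix e :: real assume e: "e > 0"
  define c where "c = qq s * (1 - qq s)"
  have c0: "c > 0" unfolding c_def using qq_pos[OF assms] by simp
  define L where "L = nat \<lceil>2 / e\<rceil> + 1"
  have L1: "1 \<le> L" unfolding L_def by simp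
  have Le: "2 / real L < e"
  proof -
    have "2 / e \<le> real (nat \<lceil>2 / e\<rceil>)" by linarith
    then have "2 / e < real L" unfolding L_def by simp
    then have "2 < real L * e" using e by (simp add: divide_less_eq)
    then show ?thesis using L1 by (simp add: divide_less_eq mult.commute)
  qed
  define N0 where "N0 = nat \<lceil>2 * real L ^ 2 / c\<rceil> + 2"
  show "\<forall>\<^sub>F n in sequentially. \<forall>x\<in>UNIV. dist (distfun (Pr n s) (Zbar n s) x - distfun (Pr n s) (Ybar n s) x) 0 < e"
  proof (rule eventually_sequentiallyI[of N0])
    fix n assume n: "N0 \<le> n"
    define N where "N = n - 1"
    have nN: "n = Suc N" unfolding N_def using n N0_def by simp
    have N1: "N \<ge> 1" unfolding N_def using n N0_def by simp
    have NL: "2 * real L ^ 2 \<le> real N * c"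
    proof -
      have "2 * real L ^ 2 / c \<le> real N" unfolding N_def using n N0_def by linarith
      then show ?thesis using c0 by (simp add: divide_le_eq mult.commute)
    qed
    show "\<forall>x\<in>UNIV. dist (distfun (Pr n s) (Zbar n s) x - distfun (Pr n s) (Ybar n s) x) 0 < e"
    proof
      fix x
      have "\<bar>distfun (Pr n s) (Zbar n s) x - distfun (Pr n s) (Ybar n s) x\<bar> \<le> 2 / real L"
        unfolding nN using main_bound[OF assms L1 NL[unfolded c_def] N1] .
      then show "dist (distfun (Pr n s) (Zbar n s) x - distfun (Pr n s) (Ybar n s) x) 0 < e"
        using Le by (simp add: dist_real_def)
    qed
  qed
qed

end
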